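(* Let $\theta$ be an inner function and let $g\in H^2$. Then for every $f\in H^\infty$, \[ \|P(\bar g\, V_\theta U f)\|=\|P^\perp(\bar{\theta}\, g\, f^* )\|, \] where $f^*(z)=\overline{f(\bar z)}$.
   Context: $L^2$ is the space of square-integrable functions on the unit circle $\mathbb{T}$, $H^2\subset L^2$ the Hardy space, $H^\infty$ the bounded analytic functions; $P$ and $P^\perp$ are the orthogonal projections of $L^2$ onto $H^2$ and onto $L^2\ominus H^2$. An inner function is an analytic $\theta$ on the unit disk with $|\theta|=1$ a.e. on $\mathbb{T}$. $U$ is the unitary operator on $L^2$ given by $(Uh)(z)=\bar z\, h(\bar z)$ for $z\in\mathbb{T}$, and $V_\theta$ is the operator $V_\theta h=P(\theta h)$ for $h\in L^2$. Norms are $L^2$ norms. *)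

theory Defs
  imports "HOL-Complex_Analysis.Complex_Analysis"
begin

definition circle_measure :: "complex measure" where
  "circle_measure = scale_measure (ennreal (1 / (2 * pi)))
     (distr (restrict_space lborel {0..2*pi}) borel (\<lambda>t. cis t))"

definition L2 :: "(complex \<Rightarrow> complex) \<Rightarrow> bool" where
  "L2 h \<longleftrightarrow> h \<in> borel_measurable circle_measure \<and>
            integrable circle_measure (\<lambda>z. (cmod (h z))\<^sup>2)"

definition l2_norm :: "(complex \<Rightarrow> complex) \<Rightarrow> real" where
  "l2_norm h = sqrt (integral\<^sup>L circle_measure (\<lambda>z. (cmod (h z))\<^sup>2))"

definition fcoef :: "(complex \<Rightarrow> complex) \<Rightarrow> int \<Rightarrow> complex" where
  "fcoef h n = integral\<^sup>L circle_measure (\<lambda>z. h z * z powi (- n))"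

definition H2 :: "(complex \<Rightarrow> complex) \<Rightarrow> bool" where
  "H2 h \<longleftrightarrow> L2 h \<and> (\<forall>n<0. fcoef h n = 0)"

definition radial_bv :: "(complex \<Rightarrow> complex) \<Rightarrow> (complex \<Rightarrow> complex) \<Rightarrow> bool" where
  "radial_bv F f \<longleftrightarrow>
     (AE z in circle_measure. ((\<lambda>r::real. F (of_real r * z)) \<longlongrightarrow> f z) (at_left 1))"

definition Hinf :: "(complex \<Rightarrow> complex) \<Rightarrow> bool" where
  "Hinf f \<longleftrightarrow> f \<in> borel_measurable circle_measure \<and>
     (\<exists>F. F holomorphic_on ball 0 1 \<and> bounded (F ` ball 0 1) \<and> radial_bv F f)"

definition inner_fun :: "(complex \<Rightarrow> complex) \<Rightarrow> bool" where
  "inner_fun \<theta> \<longleftrightarrow> Hinf \<theta> \<and> (AE z in circle_measure. cmod (\<theta> z) = 1)"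

text \<open>The projection P onto H2 (Riesz projection): the L2 function whose Fourier coefficients
  are those of h for n \<ge> 0 and 0 for n < 0.  For h in L2 this is the orthogonal projection
  onto H2; it is also applied to integrable h, where it exists iff the truncated coefficient
  sequence is square summable.\<close>
definition P_exists :: "(complex \<Rightarrow> complex) \<Rightarrow> bool" where
  "P_exists h \<longleftrightarrow> (\<exists>p. L2 p \<and> (\<forall>n. fcoef p n = (if 0 \<le> n then fcoef h n else 0)))"

definition Pproj :: "(complex \<Rightarrow> complex) \<Rightarrow> (complex \<Rightarrow> complex)" where
  "Pproj h = (SOME p. L2 p \<and> (\<forall>n. fcoef p n = (if 0 \<le> n then fcoef h n else 0)))"

definition Pperp :: "(complex \<Rightarrow> complex) \<Rightarrow> (complex \<Rightarrow> complex)" where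
  "Pperp h = (\<lambda>z. h z - Pproj h z)"

definition Uop :: "(complex \<Rightarrow> complex) \<Rightarrow> (complex \<Rightarrow> complex)" where
  "Uop h = (\<lambda>z. cnj z * h (cnj z))"

definition Vop :: "(complex \<Rightarrow> complex) \<Rightarrow> (complex \<Rightarrow> complex) \<Rightarrow> (complex \<Rightarrow> complex)" where
  "Vop \<theta> h = Pproj (\<lambda>z. \<theta> z * h z)"

definition fstar :: "(complex \<Rightarrow> complex) \<Rightarrow> (complex \<Rightarrow> complex)" where
  "fstar f = (\<lambda>z. cnj (f (cnj z)))"

end

theory Submission
  imports Defs "HOL-Probability.Probability_Measure"
begin

lemma sets_cm[measurable_cong, simp]: "sets circle_measure = sets borel"
  by (simp add: circle_measure_def)

lemma space_cm[simp]: "space circle_measure = UNIV"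
  using sets_eq_imp_space_eq[OF sets_cm] by simp

lemma cis_meas[measurable]: "cis \<in> borel_measurable borel"
  by (rule borel_measurable_continuous_onI) (simp add: cis_conv_exp continuous_intros)

lemma nn_integral_cm:
  assumes [measurable]: "g \<in> borel_measurable borel"
  shows "(\<integral>\<^sup>+z. g z \<partial>circle_measure) =
    ennreal (1/(2*pi)) * (\<integral>\<^sup>+t. g (cis t) * indicator {0..2*pi} t \<partial>lborel)"
proof -
  have "(\<integral>\<^sup>+z. g z \<partial>circle_measure) = ennreal (1/(2*pi)) *
     (\<integral>\<^sup>+z. g z \<partial>distr (restrict_space lborel {0..2*pi}) borel cis)"
    unfolding circle_measure_def by (rule nn_integral_scale_measure) simp
  also have "(\<integral>\<^sup>+z. g z \<partial>distr (restrict_space lborel {0..2*pi}) borel cis)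
     = (\<integral>\<^sup>+t. g (cis t) \<partial>restrict_space lborel {0..2*pi})"
    by (subst nn_integral_distr) (auto intro: measurable_restrict_space1)
  also have "\<dots> = (\<integral>\<^sup>+t. g (cis t) * indicator {0..2*pi} t \<partial>lborel)"
    by (subst nn_integral_restrict_space) (auto simp: nn_integral_restrict_space mult.commute indicator_mult_ennreal)
  finally show ?thesis .
qed

lemma emeasure_cm: "A \<in> sets borel \<Longrightarrow> emeasure circle_measure A =
   ennreal (1/(2*pi)) * emeasure lborel ({0..2*pi} \<inter> cis -` A)"
proof -
  assume A[measurable]: "A \<in> sets borel"
  have "emeasure circle_measure A = (\<integral>\<^sup>+z. indicator A z \<partial>circle_measure)"
    by (subst nn_integral_indicator) auto
  also have "\<dots> = ennreal (1/(2*pi)) * (\<integral>\<^sup>+t. indicator A (cis t) * indicator {0..2*pi} t \<partial>lborel)"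
    by (rule nn_integral_cm) simp
  also have "(\<integral>\<^sup>+t. indicator A (cis t) * indicator {0..2*pi} t \<partial>lborel) =
     (\<integral>\<^sup>+t. indicator ({0..2*pi} \<inter> cis -` A) t \<partial>lborel)"
    by (intro nn_integral_cong) (auto simp: indicator_def)
  also have "\<dots> = emeasure lborel ({0..2*pi} \<inter> cis -` A)"
    by (subst nn_integral_indicator) auto
  finally show ?thesis .
qed

lemma prob_cm: "prob_space circle_measure"
proof
  have "emeasure circle_measure UNIV = ennreal (1/(2*pi)) * emeasure lborel {0..2*pi}"
    by (subst emeasure_cm) auto
  also have "\<dots> = 1" by (simp add: ennreal_mult[symmetric])
  finally show "emeasure circle_measure (space circle_measure) = 1" by simp
qed

interpretation cm: prob_space circle_measure by (rule prob_cm)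

lemma AE_cm_circle: "AE z in circle_measure. cmod z = 1"
proof -
  have "emeasure circle_measure {z. cmod z \<noteq> 1} = 0"
    by (subst emeasure_cm) auto
  then show ?thesis
    by (intro AE_I[where N="{z. cmod z \<noteq> 1}"]) auto
qed

lemma cm_density: "circle_measure =
   density (distr (restrict_space lborel {0..2*pi}) borel cis) (\<lambda>_. ennreal (1/(2*pi)))"
proof (rule measure_eqI)
  show "sets circle_measure = sets (density (distr (restrict_space lborel {0..2*pi}) borel cis) (\<lambda>_. ennreal (1/(2*pi))))"
    by simp
  fix A assume A: "A \<in> sets circle_measure"
  then show "emeasure circle_measure A = emeasure (density (distr (restrict_space lborel {0..2*pi}) borel cis) (\<lambda>_. ennreal (1/(2*pi)))) A"
    by (simp add: circle_measure_def emeasure_density nn_integral_cmult_indicator)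
qed

lemma integral_cm:
  fixes g :: "complex \<Rightarrow> 'b::{banach, second_countable_topology}"
  assumes [measurable]: "g \<in> borel_measurable borel"
  shows "integral\<^sup>L circle_measure g = (1/(2*pi)) *\<^sub>R (LBINT t:{0..2*pi}. g (cis t))"
proof -
  have [measurable]: "cis \<in> borel_measurable (restrict_space lborel {0..2*pi})"
    by (rule measurable_restrict_space1) simp
  have "integral\<^sup>L circle_measure g = integral\<^sup>L (distr (restrict_space lborel {0..2*pi}) borel cis) (\<lambda>z. (1/(2*pi)) *\<^sub>R g z)"
    by (subst cm_density, subst integral_density) auto
  also have "\<dots> = integral\<^sup>L (restrict_space lborel {0..2*pi}) (\<lambda>t. (1/(2*pi)) *\<^sub>R g (cis t))"
    by (subst integral_distr) auto
  also have "\<dots> = integral\<^sup>L lborel (\<lambda>t. indicator {0..2*pi} t *\<^sub>R ((1/(2*pi)) *\<^sub>R g (cis t)))"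
    by (subst integral_restrict_space) auto
  also have "\<dots> = (1/(2*pi)) *\<^sub>R (LBINT t:{0..2*pi}. g (cis t))"
    unfolding set_lebesgue_integral_def
    by (subst integral_scaleR_right[symmetric]) (simp add: scaleR_left_commute)
  finally show ?thesis .
qed

lemma powi_meas[measurable]: "(\<lambda>z::complex. z powi n) \<in> borel_measurable borel"
  by (rule borel_measurable_continuous_countable_exceptions[where X="{0}"])
     (auto intro!: continuous_intros)

lemma moment_cm: "integral\<^sup>L circle_measure (\<lambda>z. z powi n) = (if n = 0 then 1 else 0)"
proof (cases "n = 0")
  case True then show ?thesis using cm.prob_space by simp
next
  case False
  have A: "(LBINT t=ereal 0..ereal (2*pi). cis (of_int n * t)) = cis (of_int n * (2*pi)) / (\<i> * of_int n) - cis (of_int n * 0) / (\<i> * of_int n)"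
  proof (rule interval_integral_FTC_finite)
    show "continuous_on {min 0 (2 * pi)..max 0 (2 * pi)} (\<lambda>t. cis (real_of_int n * t))"
      by (intro continuous_intros)
    fix x
    show "((\<lambda>t. cis (of_int n * t) / (\<i> * of_int n)) has_vector_derivative cis (real_of_int n * x))
      (at x within {min 0 (2 * pi)..max 0 (2 * pi)})"
      unfolding has_vector_derivative_def
      by (rule derivative_eq_intros refl | simp)+
         (use False in \<open>auto simp: fun_eq_iff scaleR_conv_of_real field_simps\<close>)
  qed
  have B: "cis (of_int n * (2*pi)) / (\<i> * of_int n) - cis (of_int n * 0) / (\<i> * of_int n) = 0"
  proof -
    have "cis (of_int n * (2*pi)) = 1"
      by (metis cis_multiple_2pi Ints_of_int mult.commute)
    then show ?thesis by simp
  qed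
  have "(LBINT t:{0..2*pi}. (cis t) powi n) = 0"
    using interval_integral_Icc[of 0 "2*pi" "\<lambda>t. cis (of_int n * t)"] A B
    by (simp add: cis_power_int)
  then show ?thesis using False by (simp add: integral_cm)
qed

lemma lborel_reflect:
  assumes [measurable]: "S \<in> sets borel"
  shows "emeasure lborel S = emeasure lborel ((\<lambda>x::real. 2*pi - x) -` S)"
proof -
  have "lborel = density (distr lborel borel (\<lambda>x::real. 2*pi + (-1) * x)) (\<lambda>_. ennreal \<bar>-1\<bar>)"
    by (rule lborel_real_affine) simp
  then have "lborel = distr lborel borel (\<lambda>x::real. 2*pi - x)"
    by (simp add: density_1)
  then have "emeasure lborel S = emeasure (distr lborel borel (\<lambda>x::real. 2*pi - x)) S"
    by simp
  also have "\<dots> = emeasure lborel ((\<lambda>x::real. 2*pi - x) -` S)"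
    by (subst emeasure_distr) auto
  finally show ?thesis .
qed

lemma cis_2pi_minus: "cis (2*pi - t) = cis (-t)"
  by (simp add: complex_eq_iff cos_diff sin_diff)

lemma cnj_meas[measurable]: "cnj \<in> borel_measurable borel"
  by (rule borel_measurable_continuous_onI) (intro continuous_intros)

lemma cnj_pre_borel: "N \<in> sets borel \<Longrightarrow> cnj -` N \<in> sets borel"
  using measurable_sets_borel[OF cnj_meas] by simp

lemma null_cm_cnj:
  assumes N[measurable]: "N \<in> sets borel" and "emeasure circle_measure N = 0"
  shows "emeasure circle_measure (cnj -` N) = 0"
proof -
  have "emeasure lborel ({0..2*pi} \<inter> cis -` N) = 0"
    using assms(2) by (simp add: emeasure_cm)
  moreover have "(\<lambda>x::real. 2*pi - x) -` ({0..2*pi} \<inter> cis -` N) = {0..2*pi} \<inter> cis -` (cnj -` N)"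
    by (auto simp: cis_2pi_minus cis_cnj)
  moreover have [measurable]: "{0..2*pi} \<inter> cis -` N \<in> sets borel"
    by measurable
  ultimately have "emeasure lborel ({0..2*pi} \<inter> cis -` (cnj -` N)) = 0"
    using lborel_reflect by metis
  then show ?thesis
    by (subst emeasure_cm) (auto intro: cnj_pre_borel)
qed

lemma AE_cm_cnj:
  assumes "AE z in circle_measure. P z"
  shows "AE z in circle_measure. P (cnj z)"
proof -
  from assms obtain N where N: "{z. \<not> P z} \<subseteq> N" "emeasure circle_measure N = 0" "N \<in> sets borel"
    by (force elim: AE_E)
  have "emeasure circle_measure (cnj -` N) = 0"
    using null_cm_cnj N by auto
  moreover have "cnj -` N \<in> sets borel" using N(3) by (rule cnj_pre_borel)
  ultimately show ?thesis
    using N(1) by (intro AE_I[where N="cnj -` N"]) auto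
qed

abbreviation "cm \<equiv> circle_measure"

lemma meas_cm_iff: "f \<in> borel_measurable cm \<longleftrightarrow> f \<in> borel_measurable borel"
  by (simp add: measurable_cong_sets[OF sets_cm refl])

lemma L2_meas: "L2 h \<Longrightarrow> h \<in> borel_measurable borel"
  by (simp add: L2_def meas_cm_iff)

lemma L2_sq_int: "L2 h \<Longrightarrow> integrable cm (\<lambda>z. (cmod (h z))\<^sup>2)"
  by (simp add: L2_def)

lemma L2I: "h \<in> borel_measurable borel \<Longrightarrow> integrable cm (\<lambda>z. (cmod (h z))\<^sup>2) \<Longrightarrow> L2 h"
  by (simp add: L2_def meas_cm_iff)

lemma int_bound:
  fixes g :: "complex \<Rightarrow> 'b::{banach, second_countable_topology}" and f :: "complex \<Rightarrow> 'c::{banach, second_countable_topology}"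
  assumes "integrable cm f" "g \<in> borel_measurable borel" "AE z in cm. norm (g z) \<le> norm (f z)"
  shows "integrable cm g"
  using assms(1) _ assms(3) by (rule Bochner_Integration.integrable_bound) (simp add: meas_cm_iff assms(2))

lemma sq_add_le: "(cmod (u + v))\<^sup>2 \<le> 2 * (cmod u)\<^sup>2 + 2 * (cmod v)\<^sup>2"
proof -
  have "cmod (u + v) \<le> cmod u + cmod v" by (rule norm_triangle_ineq)
  then have "(cmod (u + v))\<^sup>2 \<le> (cmod u + cmod v)\<^sup>2"
    by (intro power_mono) auto
  also have "\<dots> \<le> 2 * (cmod u)\<^sup>2 + 2 * (cmod v)\<^sup>2"
    using sum_squares_ge_zero[of "cmod u - cmod v" 0] by (simp add: power2_eq_square algebra_simps)
  finally show ?thesis .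
qed

lemma L2_add: assumes "L2 a" "L2 b" shows "L2 (\<lambda>z. a z + b z)"
proof (rule L2I)
  have [measurable]: "a \<in> borel_measurable borel" "b \<in> borel_measurable borel"
    using assms by (auto simp: L2_meas)
  show "(\<lambda>z. a z + b z) \<in> borel_measurable borel" by measurable
  have *: "AE z in cm. norm ((cmod (a z + b z))\<^sup>2) \<le> norm (2 * (cmod (a z))\<^sup>2 + 2 * (cmod (b z))\<^sup>2)"
    by (rule AE_I2) (use sq_add_le in simp)
  have I: "integrable cm (\<lambda>z. 2 * (cmod (a z))\<^sup>2 + 2 * (cmod (b z))\<^sup>2)"
    using assms by (simp add: L2_sq_int)
  have M: "(\<lambda>z. (cmod (a z + b z))\<^sup>2) \<in> borel_measurable borel" by measurable
  show "integrable cm (\<lambda>z. (cmod (a z + b z))\<^sup>2)"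
    by (rule int_bound[OF I M *])
qed

lemma L2_bmult:
  assumes "L2 a" and [measurable]: "g \<in> borel_measurable borel" and "AE z in cm. cmod (g z) \<le> B"
  shows "L2 (\<lambda>z. g z * a z)"
proof (rule L2I)
  have [measurable]: "a \<in> borel_measurable borel"
    using assms by (auto simp: L2_meas)
  show "(\<lambda>z. g z * a z) \<in> borel_measurable borel" by measurable
  have "AE z in cm. norm ((cmod (g z * a z))\<^sup>2) \<le> norm (B\<^sup>2 * (cmod (a z))\<^sup>2)"
    using assms(3)
  proof eventually_elim
    case (elim z)
    have "(cmod (g z * a z))\<^sup>2 = (cmod (g z))\<^sup>2 * (cmod (a z))\<^sup>2" by (simp add: norm_mult power_mult_distrib)
    also have "\<dots> \<le> B\<^sup>2 * (cmod (a z))\<^sup>2"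
      using elim by (intro mult_right_mono power_mono) auto
    finally show ?case by simp
  qed
  note * = this
  have I: "integrable cm (\<lambda>z. B\<^sup>2 * (cmod (a z))\<^sup>2)"
    using assms by (simp add: L2_sq_int)
  have M: "(\<lambda>z. (cmod (g z * a z))\<^sup>2) \<in> borel_measurable borel" by measurable
  show "integrable cm (\<lambda>z. (cmod (g z * a z))\<^sup>2)"
    by (rule int_bound[OF I M *])
qed

lemma L2_const: "L2 (\<lambda>z. c)"
  by (rule L2I) auto

lemma L2_bounded:
  assumes [measurable]: "g \<in> borel_measurable borel" and "AE z in cm. cmod (g z) \<le> B"
  shows "L2 g"
  using L2_bmult[OF L2_const[of 1] assms] by simp

lemma L2_cmult: "L2 a \<Longrightarrow> L2 (\<lambda>z. c * a z)"
  by (rule L2_bmult[where B="cmod c"]) auto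

lemma L2_uminus: "L2 a \<Longrightarrow> L2 (\<lambda>z. - a z)"
  using L2_cmult[of a "-1"] by simp

lemma L2_diff: "L2 a \<Longrightarrow> L2 b \<Longrightarrow> L2 (\<lambda>z. a z - b z)"
  using L2_add[of a "\<lambda>z. - b z"] L2_uminus[of b] by simp

lemma L2_cnj: "L2 a \<Longrightarrow> L2 (\<lambda>z. cnj (a z))"
  by (rule L2I) (auto simp: L2_sq_int dest: L2_meas)

lemma L2_cong_AE:
  assumes "L2 a" "b \<in> borel_measurable borel" "AE z in cm. a z = b z" shows "L2 b"
proof (rule L2I)
  show "b \<in> borel_measurable borel" by fact
  have "AE z in cm. (cmod (a z))\<^sup>2 = (cmod (b z))\<^sup>2"
    using assms(3) by (rule eventually_mono) simp
  then show "integrable cm (\<lambda>z. (cmod (b z))\<^sup>2)"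
    using L2_sq_int[OF assms(1)] assms(2)
    by (subst integrable_cong_AE[symmetric]) (auto simp: meas_cm_iff)
qed

lemma L2_powi: "L2 (\<lambda>z. z powi n)"
proof (rule L2_bounded[where B=1])
  show "AE z in cm. cmod (z powi n) \<le> 1"
    using AE_cm_circle by eventually_elim (simp add: norm_power_int)
qed simp

lemma L2_prod_int:
  assumes "L2 a" "L2 b" shows "integrable cm (\<lambda>z. a z * b z)"
proof -
  have [measurable]: "a \<in> borel_measurable borel" "b \<in> borel_measurable borel"
    using assms by (auto simp: L2_meas)
  have "norm (a z * b z) \<le> norm ((cmod (a z))\<^sup>2 + (cmod (b z))\<^sup>2)" for z
  proof -
    have "norm (a z * b z) = cmod (a z) * cmod (b z)" by (simp add: norm_mult)
    also have "\<dots> \<le> (cmod (a z))\<^sup>2 + (cmod (b z))\<^sup>2"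
    proof -
      have h1: "0 \<le> (cmod (a z) - cmod (b z))\<^sup>2" by simp
      have h2: "0 \<le> cmod (a z) * cmod (b z)" by simp
      show ?thesis using h1 h2 unfolding power2_diff by linarith
    qed
    finally show ?thesis by simp
  qed
  then have *: "AE z in cm. norm (a z * b z) \<le> norm ((cmod (a z))\<^sup>2 + (cmod (b z))\<^sup>2)"
    by (intro AE_I2)
  have I: "integrable cm (\<lambda>z. (cmod (a z))\<^sup>2 + (cmod (b z))\<^sup>2)"
    using assms by (simp add: L2_sq_int)
  have M: "(\<lambda>z. a z * b z) \<in> borel_measurable borel" by measurable
  show ?thesis
    by (rule int_bound[OF I M *])
qed

lemma L2_int: "L2 a \<Longrightarrow> integrable cm a"
  using L2_prod_int[OF _ L2_const[of 1], of a] by simp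

definition nsq :: "(complex \<Rightarrow> complex) \<Rightarrow> real" where
  "nsq h = integral\<^sup>L cm (\<lambda>z. (cmod (h z))\<^sup>2)"

lemma nsq_nonneg: "nsq h \<ge> 0"
  unfolding nsq_def by (rule integral_nonneg_AE) auto

lemma l2_norm_nsq: "l2_norm h = sqrt (nsq h)"
  by (simp add: l2_norm_def nsq_def)

lemma nn_sq: "L2 h \<Longrightarrow> (\<integral>\<^sup>+z. ennreal ((cmod (h z))\<^sup>2) \<partial>cm) = ennreal (nsq h)"
  unfolding nsq_def by (rule nn_integral_eq_integral) (auto simp: L2_sq_int)

lemma CS_cm:
  assumes "L2 a" "L2 b"
  shows "integral\<^sup>L cm (\<lambda>z. cmod (a z) * cmod (b z)) \<le> sqrt (nsq a) * sqrt (nsq b)"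
proof -
  have [measurable]: "a \<in> borel_measurable borel" "b \<in> borel_measurable borel"
    using assms by (auto simp: L2_meas)
  have int: "integrable cm (\<lambda>z. cmod (a z) * cmod (b z))"
    using L2_prod_int[OF assms] by (simp add: norm_mult[symmetric])
  have "(\<integral>\<^sup>+z. ennreal (cmod (a z)) * ennreal (cmod (b z)) \<partial>cm)\<^sup>2 \<le>
        (\<integral>\<^sup>+z. ennreal (cmod (a z)) ^ 2 \<partial>cm) * (\<integral>\<^sup>+z. ennreal (cmod (b z)) ^ 2 \<partial>cm)"
    by (rule Cauchy_Schwarz_nn_integral) auto
  also have "(\<integral>\<^sup>+z. ennreal (cmod (a z)) ^ 2 \<partial>cm) = ennreal (nsq a)"
    using nn_sq[OF assms(1)] by (simp add: ennreal_power)
  also have "(\<integral>\<^sup>+z. ennreal (cmod (b z)) ^ 2 \<partial>cm) = ennreal (nsq b)"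
    using nn_sq[OF assms(2)] by (simp add: ennreal_power)
  also have "(\<integral>\<^sup>+z. ennreal (cmod (a z)) * ennreal (cmod (b z)) \<partial>cm) =
      ennreal (integral\<^sup>L cm (\<lambda>z. cmod (a z) * cmod (b z)))"
    by (subst ennreal_mult'[symmetric]) (auto intro!: nn_integral_eq_integral int)
  finally have "(integral\<^sup>L cm (\<lambda>z. cmod (a z) * cmod (b z)))\<^sup>2 \<le> nsq a * nsq b"
    by (simp add: ennreal_power ennreal_mult'[symmetric] nsq_nonneg integral_nonneg_AE)
  then have "sqrt ((integral\<^sup>L cm (\<lambda>z. cmod (a z) * cmod (b z)))\<^sup>2) \<le> sqrt (nsq a * nsq b)"
    by (rule real_sqrt_le_mono)
  then show ?thesis
    by (simp add: real_sqrt_mult integral_nonneg_AE)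
qed

lemma CS_cm':
  assumes "L2 a" "L2 b"
  shows "cmod (integral\<^sup>L cm (\<lambda>z. a z * b z)) \<le> sqrt (nsq a) * sqrt (nsq b)"
proof -
  have "cmod (integral\<^sup>L cm (\<lambda>z. a z * b z)) \<le> integral\<^sup>L cm (\<lambda>z. cmod (a z * b z))"
    by (rule integral_norm_bound)
  also have "\<dots> = integral\<^sup>L cm (\<lambda>z. cmod (a z) * cmod (b z))" by (simp add: norm_mult)
  also have "\<dots> \<le> sqrt (nsq a) * sqrt (nsq b)" by (rule CS_cm[OF assms])
  finally show ?thesis .
qed

lemma nsq_const1: "nsq (\<lambda>z. 1) = 1"
  unfolding nsq_def using cm.prob_space by simp

lemma L1_le_L2:
  assumes "L2 a"
  shows "integral\<^sup>L cm (\<lambda>z. cmod (a z)) \<le> sqrt (nsq a)"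
  using CS_cm[OF assms L2_const[of 1]] by (simp add: nsq_const1)

lemma AE_cm_nz: "AE z in cm. z \<noteq> 0"
  using AE_cm_circle by eventually_elim auto

lemma cnj_powi_circle: "cmod z = 1 \<Longrightarrow> cnj (z powi n) = z powi (-n)"
proof -
  assume z: "cmod z = 1"
  have "z * cnj z = 1" using complex_norm_square[of z] z by simp
  then have "cnj z = inverse z"
    by (metis inverse_unique)
  then show ?thesis
    by (simp only: complex_cnj_power_int power_int_inverse power_int_minus)
qed

lemma cnj_powi_circle': "cmod z = 1 \<Longrightarrow> cnj z powi n = z powi (-n)"
  using cnj_powi_circle[of z n] by simp

lemma cnorm_sq: "(complex_of_real (cmod c))\<^sup>2 = c * cnj c"
  using complex_norm_square[of c] by simp

lemma powi_prod_moment: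
  "integral\<^sup>L cm (\<lambda>z. z powi n * z powi k) = (if n + k = 0 then 1 else 0)"
proof -
  have "integral\<^sup>L cm (\<lambda>z. z powi n * z powi k) = integral\<^sup>L cm (\<lambda>z. z powi (n + k))"
    by (rule integral_cong_AE) (use AE_cm_nz in \<open>auto simp: power_int_add elim!: eventually_mono\<close>)
  then show ?thesis by (simp add: moment_cm)
qed

definition ip :: "(complex \<Rightarrow> complex) \<Rightarrow> (complex \<Rightarrow> complex) \<Rightarrow> complex" where
  "ip a b = integral\<^sup>L cm (\<lambda>z. a z * cnj (b z))"

definition tp :: "(int \<Rightarrow> complex) \<Rightarrow> int set \<Rightarrow> complex \<Rightarrow> complex" where
  "tp c F = (\<lambda>z. \<Sum>n\<in>F. c n * z powi n)"

lemma tp_meas[measurable]: "tp c F \<in> borel_measurable borel"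
  unfolding tp_def by measurable

lemma L2_sum: "(\<And>n. n \<in> F \<Longrightarrow> L2 (f n)) \<Longrightarrow> L2 (\<lambda>z. \<Sum>n\<in>F. f n z)"
proof (induction F rule: infinite_finite_induct)
  case (infinite A) then show ?case by (simp add: L2_const)
next
  case empty then show ?case by (simp add: L2_const)
next
  case (insert x F) then show ?case by (simp add: L2_add)
qed

lemma L2_tp: "L2 (tp c F)"
  unfolding tp_def by (intro L2_sum L2_cmult L2_powi)

lemma ip_int: "L2 a \<Longrightarrow> L2 b \<Longrightarrow> integrable cm (\<lambda>z. a z * cnj (b z))"
  by (intro L2_prod_int L2_cnj)

lemma ip_self: "ip a a = of_real (nsq a)"
  unfolding ip_def nsq_def complex_norm_square[symmetric] by (rule integral_complex_of_real)

lemma ip_cnj: "ip b a = cnj (ip a b)"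
  unfolding ip_def Bochner_Integration.integral_cnj[symmetric] by (simp add: mult.commute)

lemma ip_diff_left: "L2 a \<Longrightarrow> L2 b \<Longrightarrow> L2 c \<Longrightarrow> ip (\<lambda>z. a z - b z) c = ip a c - ip b c"
  unfolding ip_def by (simp add: left_diff_distrib ip_int)

lemma ip_diff_right: "L2 a \<Longrightarrow> L2 b \<Longrightarrow> L2 c \<Longrightarrow> ip c (\<lambda>z. a z - b z) = ip c a - ip c b"
  by (metis (no_types, lifting) ip_cnj ip_diff_left complex_cnj_diff)

lemma ip_powi: "L2 a \<Longrightarrow> ip a (\<lambda>z. z powi n) = fcoef a n"
proof -
  assume "L2 a"
  then have [measurable]: "a \<in> borel_measurable borel" by (rule L2_meas)
  show ?thesis
    unfolding ip_def fcoef_def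
    by (rule integral_cong_AE) (use AE_cm_circle in \<open>auto simp: cnj_powi_circle' elim!: eventually_mono\<close>)
qed

lemma fcoef_int: "L2 a \<Longrightarrow> integrable cm (\<lambda>z. a z * z powi n)"
  by (intro L2_prod_int L2_powi)

lemma ip_tp_right: "L2 a \<Longrightarrow> ip a (tp c F) = (\<Sum>n\<in>F. cnj (c n) * fcoef a n)"
proof -
  assume a: "L2 a"
  have "ip a (tp c F) = integral\<^sup>L cm (\<lambda>z. \<Sum>n\<in>F. cnj (c n) * (a z * cnj (z powi n)))"
    unfolding ip_def tp_def by (simp add: sum_distrib_left mult_ac)
  also have "\<dots> = (\<Sum>n\<in>F. integral\<^sup>L cm (\<lambda>z. cnj (c n) * (a z * cnj (z powi n))))"
  proof (rule Bochner_Integration.integral_sum)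
    fix n show "integrable cm (\<lambda>z. cnj (c n) * (a z * cnj (z powi n)))"
      by (rule integrable_mult_right) (rule ip_int[OF a L2_powi])
  qed
  also have "\<dots> = (\<Sum>n\<in>F. cnj (c n) * ip a (\<lambda>z. z powi n))"
    unfolding ip_def by simp
  finally show ?thesis by (simp add: ip_powi a)
qed

lemma fcoef_tp: "finite F \<Longrightarrow> fcoef (tp c F) m = (if m \<in> F then c m else 0)"
proof -
  assume F: "finite F"
  have "fcoef (tp c F) m = integral\<^sup>L cm (\<lambda>z. \<Sum>n\<in>F. c n * (z powi n * z powi (-m)))"
    unfolding fcoef_def tp_def
    by (intro arg_cong[where f="integral\<^sup>L cm"] ext) (simp add: sum_distrib_right mult.assoc)
  also have "\<dots> = (\<Sum>n\<in>F. integral\<^sup>L cm (\<lambda>z. c n * (z powi n * z powi (-m))))"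
  proof (rule Bochner_Integration.integral_sum)
    fix n show "integrable cm (\<lambda>z. c n * (z powi n * z powi (-m)))"
      by (rule integrable_mult_right) (rule L2_prod_int[OF L2_powi L2_powi])
  qed
  also have "\<dots> = (\<Sum>n\<in>F. c n * integral\<^sup>L cm (\<lambda>z. z powi n * z powi (-m)))"
    by simp
  also have "\<dots> = (\<Sum>n\<in>F. if n = m then c n else 0)"
    by (intro sum.cong) (auto simp: powi_prod_moment)
  also have "\<dots> = (if m \<in> F then c m else 0)"
    using F by (simp add: sum.delta')
  finally show ?thesis .
qed

lemma ip_tp_tp: "finite F \<Longrightarrow> ip (tp c F) (tp c F) = (\<Sum>n\<in>F. of_real ((cmod (c n))\<^sup>2))"
  by (simp add: ip_tp_right L2_tp fcoef_tp cnorm_sq mult.commute)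

lemma nsq_tp: "finite F \<Longrightarrow> nsq (tp c F) = (\<Sum>n\<in>F. (cmod (c n))\<^sup>2)"
proof -
  assume F: "finite F"
  have "complex_of_real (nsq (tp c F)) = complex_of_real (\<Sum>n\<in>F. (cmod (c n))\<^sup>2)"
    unfolding ip_self[symmetric] ip_tp_tp[OF F] by simp
  then show ?thesis by (simp only: of_real_eq_iff)
qed

lemma nsq_diff_tp:
  assumes h: "L2 h" and F: "finite F"
  shows "nsq (\<lambda>z. h z - tp (fcoef h) F z) = nsq h - (\<Sum>n\<in>F. (cmod (fcoef h n))\<^sup>2)"
proof -
  let ?S = "tp (fcoef h) F"
  have S: "L2 ?S" by (rule L2_tp)
  have 1: "ip h ?S = (\<Sum>n\<in>F. of_real ((cmod (fcoef h n))\<^sup>2))"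
    using h by (simp add: ip_tp_right cnorm_sq mult.commute)
  have 2: "ip ?S h = (\<Sum>n\<in>F. of_real ((cmod (fcoef h n))\<^sup>2))"
    by (subst ip_cnj) (simp add: 1)
  have "of_real (nsq (\<lambda>z. h z - ?S z)) = ip (\<lambda>z. h z - ?S z) (\<lambda>z. h z - ?S z)"
    by (rule ip_self[symmetric])
  also have "\<dots> = ip h h - ip h ?S - (ip ?S h - ip ?S ?S)"
    using h S by (simp add: ip_diff_left ip_diff_right L2_diff)
  also have "\<dots> = of_real (nsq h - (\<Sum>n\<in>F. (cmod (fcoef h n))\<^sup>2))"
    using F by (simp add: 1 2 ip_tp_tp ip_self[symmetric])
  finally show ?thesis by (simp only: of_real_eq_iff)
qed

lemma bessel: "L2 h \<Longrightarrow> finite F \<Longrightarrow> (\<Sum>n\<in>F. (cmod (fcoef h n))\<^sup>2) \<le> nsq h"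
  using nsq_diff_tp[of h F] nsq_nonneg[of "\<lambda>z. h z - tp (fcoef h) F z"] by simp

lemma fcoef_diff: "L2 a \<Longrightarrow> L2 b \<Longrightarrow> fcoef (\<lambda>z. a z - b z) n = fcoef a n - fcoef b n"
  unfolding fcoef_def by (simp add: left_diff_distrib fcoef_int)

lemma fcoef_bound: "L2 a \<Longrightarrow> cmod (fcoef a n) \<le> sqrt (nsq a)"
proof -
  assume a: "L2 a"
  then have [measurable]: "a \<in> borel_measurable borel" by (rule L2_meas)
  have "cmod (fcoef a n) \<le> integral\<^sup>L cm (\<lambda>z. cmod (a z * z powi (-n)))"
    unfolding fcoef_def by (rule integral_norm_bound)
  also have "\<dots> = integral\<^sup>L cm (\<lambda>z. cmod (a z))"
  proof (rule integral_cong_AE)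
    show "(\<lambda>z. cmod (a z * z powi (-n))) \<in> borel_measurable cm" by measurable
    show "(\<lambda>z. cmod (a z)) \<in> borel_measurable cm" by measurable
    show "AE z in cm. cmod (a z * z powi (-n)) = cmod (a z)"
      using AE_cm_circle by eventually_elim (simp add: norm_mult norm_power_int)
  qed
  also have "\<dots> \<le> sqrt (nsq a)" by (rule L1_le_L2[OF a])
  finally show ?thesis .
qed

lemma nsq_L2_le:
  assumes "L2 q" "(\<integral>\<^sup>+z. ennreal ((cmod (q z))\<^sup>2) \<partial>cm) \<le> ennreal e" "0 \<le> e"
  shows "nsq q \<le> e"
  using assms nn_sq[OF assms(1)] by (simp add: nsq_nonneg)

lemma L2_of_nn:
  assumes [measurable]: "q \<in> borel_measurable borel" and "(\<integral>\<^sup>+z. ennreal ((cmod (q z))\<^sup>2) \<partial>cm) < \<infinity>"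
  shows "L2 q"
proof (rule L2I)
  show "q \<in> borel_measurable borel" by fact
  show "integrable cm (\<lambda>z. (cmod (q z))\<^sup>2)"
    by (rule integrableI_bounded) (use assms(2) in auto)
qed

lemma nsq_commute: "nsq (\<lambda>z. a z - b z) = nsq (\<lambda>z. b z - a z)"
  unfolding nsq_def by (simp add: norm_minus_commute)

lemma complete_L2:
  fixes s :: "nat \<Rightarrow> complex \<Rightarrow> complex"
  assumes s: "\<And>n. L2 (s n)"
    and cauchy: "\<And>e. e > 0 \<Longrightarrow> \<exists>N. \<forall>i\<ge>N. \<forall>j\<ge>N. nsq (\<lambda>z. s i z - s j z) < e"
  shows "\<exists>p. L2 p \<and> (\<lambda>n. nsq (\<lambda>z. s n z - p z)) \<longlonglongrightarrow> 0"
proof -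
  have [measurable]: "s n \<in> borel_measurable borel" for n using s by (rule L2_meas)
  have int: "integrable cm (s n)" for n using s by (rule L2_int)
  have L1c: "\<exists>N. \<forall>i\<ge>N. \<forall>j\<ge>N. (LINT x|cm. norm (s i x - s j x)) < e" if e: "e > 0" for e
  proof -
    obtain N where N: "\<forall>i\<ge>N. \<forall>j\<ge>N. nsq (\<lambda>z. s i z - s j z) < e\<^sup>2"
      using cauchy[of "e\<^sup>2"] e by auto
    have "(LINT x|cm. norm (s i x - s j x)) < e" if "i \<ge> N" "j \<ge> N" for i j
    proof -
      have "(LINT x|cm. norm (s i x - s j x)) \<le> sqrt (nsq (\<lambda>z. s i z - s j z))"
        by (rule L1_le_L2) (intro L2_diff s)
      also have "\<dots> < sqrt (e\<^sup>2)"
        using N that by (intro real_sqrt_less_mono) auto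
      finally show ?thesis using e by simp
    qed
    then show ?thesis by blast
  qed
  obtain r where r: "strict_mono r" and ae: "AE x in cm. Cauchy (\<lambda>i. s (r i) x)"
    using cauchy_L1_AE_cauchy_subseq[of cm s, OF int L1c] by blast
  define p where "p = (\<lambda>x. lim (\<lambda>i. s (r i) x))"
  have [measurable]: "p \<in> borel_measurable borel"
    unfolding p_def by measurable
  have conv: "AE x in cm. (\<lambda>i. s (r i) x) \<longlonglongrightarrow> p x"
    using ae by eventually_elim (simp add: p_def Cauchy_convergent_iff convergent_LIMSEQ_iff)
  have key: "(\<integral>\<^sup>+z. ennreal ((cmod (s n z - p z))\<^sup>2) \<partial>cm) \<le> ennreal e"
    if e: "e > 0" and N: "\<forall>i\<ge>N. \<forall>j\<ge>N. nsq (\<lambda>z. s i z - s j z) < e" and n: "n \<ge> N" for e N n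
  proof -
    have "(\<integral>\<^sup>+z. ennreal ((cmod (s n z - p z))\<^sup>2) \<partial>cm) =
          (\<integral>\<^sup>+z. liminf (\<lambda>i. ennreal ((cmod (s n z - s (r i) z))\<^sup>2)) \<partial>cm)"
    proof (rule nn_integral_cong_AE)
      show "AE z in cm. ennreal ((cmod (s n z - p z))\<^sup>2) = liminf (\<lambda>i. ennreal ((cmod (s n z - s (r i) z))\<^sup>2))"
        using conv
      proof eventually_elim
        case (elim z)
        have "(\<lambda>i. ennreal ((cmod (s n z - s (r i) z))\<^sup>2)) \<longlonglongrightarrow> ennreal ((cmod (s n z - p z))\<^sup>2)"
          by (intro tendsto_intros elim)
        from lim_imp_Liminf[OF trivial_limit_sequentially this] show ?case by simp
      qed
    qed
    also have "\<dots> \<le> liminf (\<lambda>i. \<integral>\<^sup>+z. ennreal ((cmod (s n z - s (r i) z))\<^sup>2) \<partial>cm)"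
      by (rule nn_integral_liminf) measurable
    also have "\<dots> = liminf (\<lambda>i. ennreal (nsq (\<lambda>z. s n z - s (r i) z)))"
      by (simp add: nn_sq L2_diff s)
    also have "\<dots> \<le> limsup (\<lambda>i. ennreal (nsq (\<lambda>z. s n z - s (r i) z)))"
      by (rule Liminf_le_Limsup) simp
    also have "\<dots> \<le> ennreal e"
    proof (rule Limsup_bounded)
      show "\<forall>\<^sub>F i in sequentially. ennreal (nsq (\<lambda>z. s n z - s (r i) z)) \<le> ennreal e"
      proof (rule eventually_sequentiallyI[of N])
        fix i assume "N \<le> i"
        then have "r i \<ge> N" using seq_suble[OF r, of i] by linarith
        then show "ennreal (nsq (\<lambda>z. s n z - s (r i) z)) \<le> ennreal e"
          using N n by (intro ennreal_leI) (auto intro: less_imp_le)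
      qed
    qed
    finally show ?thesis .
  qed
  obtain N1 where N1: "\<forall>i\<ge>N1. \<forall>j\<ge>N1. nsq (\<lambda>z. s i z - s j z) < 1"
    using cauchy[of 1] by auto
  have "L2 (\<lambda>z. s N1 z - p z)"
  proof (rule L2_of_nn)
    have "(\<integral>\<^sup>+z. ennreal ((cmod (s N1 z - p z))\<^sup>2) \<partial>cm) \<le> ennreal 1"
      using key[OF _ N1 order_refl] by simp
    also have "\<dots> < \<infinity>" by simp
    finally show "(\<integral>\<^sup>+z. ennreal ((cmod (s N1 z - p z))\<^sup>2) \<partial>cm) < \<infinity>" .
  qed measurable
  then have p: "L2 p"
    using L2_diff[OF s[of N1] \<open>L2 (\<lambda>z. s N1 z - p z)\<close>] by simp
  have "(\<lambda>n. nsq (\<lambda>z. s n z - p z)) \<longlonglongrightarrow> 0"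
  proof (rule LIMSEQ_I)
    fix e :: real assume e: "e > 0"
    obtain N where N: "\<forall>i\<ge>N. \<forall>j\<ge>N. nsq (\<lambda>z. s i z - s j z) < e/2"
      using cauchy[of "e/2"] e by auto
    have "norm (nsq (\<lambda>z. s n z - p z)) < e" if "n \<ge> N" for n
    proof -
      have "nsq (\<lambda>z. s n z - p z) \<le> e/2"
        by (rule nsq_L2_le) (use key[OF _ N that] e p s in \<open>auto intro: L2_diff\<close>)
      then show ?thesis using e nsq_nonneg by simp
    qed
    then show "\<exists>N. \<forall>n\<ge>N. norm (nsq (\<lambda>z. s n z - p z) - 0) < e" by auto
  qed
  with p show ?thesis by blast
qed



lemma tp_split:
  assumes "j \<le> i"
  shows "tp c {0..int i} z = tp c {0..int j} z + tp c {int j<..int i} z"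
proof -
  have "{0..int i} = {0..int j} \<union> {int j<..int i}" using assms by auto
  then show ?thesis unfolding tp_def
    by (simp add: sum.union_disjoint ivl_disj_int)
qed

lemma proj_exists:
  assumes k: "L2 k"
  shows "\<exists>p. L2 p \<and> (\<forall>m. fcoef p m = (if 0 \<le> m then fcoef k m else 0)) \<and>
             (\<lambda>N. nsq (\<lambda>z. tp (fcoef k) {0..int N} z - p z)) \<longlonglongrightarrow> 0"
proof -
  define c where "c = fcoef k"
  define s where "s = (\<lambda>N::nat. tp c {0..int N})"
  define A where "A = (\<lambda>N::nat. \<Sum>n\<in>{0..int N}. (cmod (c n))\<^sup>2)"
  have s: "L2 (s N)" for N unfolding s_def by (rule L2_tp)
  have diff: "nsq (\<lambda>z. s i z - s j z) = A i - A j" if "j \<le> i" for i j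
  proof -
    have "(\<lambda>z. s i z - s j z) = tp c {int j<..int i}"
      unfolding s_def using tp_split[OF that, of c] by auto
    then have "nsq (\<lambda>z. s i z - s j z) = (\<Sum>n\<in>{int j<..int i}. (cmod (c n))\<^sup>2)"
      by (simp add: nsq_tp)
    also have "\<dots> = A i - A j"
    proof -
      have "{0..int i} = {0..int j} \<union> {int j<..int i}" using that by auto
      then show ?thesis unfolding A_def
        by (simp add: sum.union_disjoint ivl_disj_int)
    qed
    finally show ?thesis .
  qed
  have Abound: "A N \<le> nsq k" for N
    unfolding A_def c_def by (rule bessel[OF k]) simp
  have Amono: "mono A"
  proof (rule monoI)
    fix j i :: nat assume "j \<le> i"
    then show "A j \<le> A i" unfolding A_def
      by (intro sum_mono2) auto
  qed
  have "Bseq A"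
  proof (rule BseqI'[where K="nsq k"])
    fix N
    have "0 \<le> A N" unfolding A_def by (intro sum_nonneg) auto
    then show "norm (A N) \<le> nsq k" using Abound[of N] by simp
  qed
  then have "convergent A"
    using Amono by (intro Bseq_monoseq_convergent) (auto simp: monoseq_def mono_def)
  then have CA: "Cauchy A" by (rule convergent_Cauchy)
  have cauchy: "\<exists>N. \<forall>i\<ge>N. \<forall>j\<ge>N. nsq (\<lambda>z. s i z - s j z) < e" if e: "e > 0" for e
  proof -
    obtain M where M: "\<forall>m\<ge>M. \<forall>n\<ge>M. norm (A m - A n) < e"
      using CauchyD[OF CA e] by blast
    have "nsq (\<lambda>z. s i z - s j z) < e" if "i \<ge> M" "j \<ge> M" for i j
    proof (cases "j \<le> i")
      case True
      have "norm (A i - A j) < e" using M that by blast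
      then show ?thesis using diff[OF True] by simp
    next
      case False
      have "norm (A j - A i) < e" using M that by blast
      then have "nsq (\<lambda>z. s j z - s i z) < e" using diff[of i j] False by simp
      then show ?thesis using nsq_commute[of "s i" "s j"] by simp
    qed
    then show ?thesis by blast
  qed
  obtain p where p: "L2 p" and lim: "(\<lambda>n. nsq (\<lambda>z. s n z - p z)) \<longlonglongrightarrow> 0"
    using complete_L2[OF s cauchy] by blast
  have coef: "fcoef p m = (if 0 \<le> m then c m else 0)" for m
  proof -
    have t1: "(\<lambda>N. fcoef (s N) m) \<longlonglongrightarrow> fcoef p m"
    proof (rule LIM_zero_cancel)
      have "(\<lambda>N. sqrt (nsq (\<lambda>z. s N z - p z))) \<longlonglongrightarrow> sqrt 0"
        by (intro tendsto_real_sqrt lim)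
      then have sq: "(\<lambda>N. sqrt (nsq (\<lambda>z. s N z - p z))) \<longlonglongrightarrow> 0" by simp
      show "(\<lambda>N. fcoef (s N) m - fcoef p m) \<longlonglongrightarrow> 0"
      proof (rule Lim_null_comparison[OF _ sq])
        show "\<forall>\<^sub>F N in sequentially. norm (fcoef (s N) m - fcoef p m) \<le> sqrt (nsq (\<lambda>z. s N z - p z))"
        proof (rule always_eventually, rule allI)
          fix N
          have "fcoef (s N) m - fcoef p m = fcoef (\<lambda>z. s N z - p z) m"
            by (rule fcoef_diff[symmetric]) (use s p in auto)
          also have "norm \<dots> \<le> sqrt (nsq (\<lambda>z. s N z - p z))"
            by (rule fcoef_bound) (intro L2_diff s p)
          finally show "norm (fcoef (s N) m - fcoef p m) \<le> sqrt (nsq (\<lambda>z. s N z - p z))" .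
        qed
      qed
    qed
    have t2: "(\<lambda>N. fcoef (s N) m) \<longlonglongrightarrow> (if 0 \<le> m then c m else 0)"
    proof (rule tendsto_eventually, rule eventually_sequentiallyI[of "nat m"])
      fix N assume "nat m \<le> N"
      then show "fcoef (s N) m = (if 0 \<le> m then c m else 0)"
        unfolding s_def by (simp add: fcoef_tp)
    qed
    show ?thesis using LIMSEQ_unique[OF t1 t2] .
  qed
  show ?thesis
    using p coef lim unfolding s_def c_def by blast
qed

definition lp :: "(complex \<times> int) list \<Rightarrow> complex \<Rightarrow> complex" where
  "lp xs z = (\<Sum>(c,e)\<leftarrow>xs. c * z powi e)"

lemma lp_Nil[simp]: "lp [] z = 0"
  by (simp add: lp_def)

lemma lp_Cons[simp]: "lp ((c,e)#xs) z = c * z powi e + lp xs z"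
  by (simp add: lp_def)

lemma lp_append[simp]: "lp (xs @ ys) z = lp xs z + lp ys z"
  by (simp add: lp_def)

definition mulp :: "(complex \<times> int) list \<Rightarrow> (complex \<times> int) list \<Rightarrow> (complex \<times> int) list" where
  "mulp xs ys = concat (map (\<lambda>(c,e). map (\<lambda>(d,f). (c*d, e+f)) ys) xs)"

lemma lp_scale: "z \<noteq> 0 \<Longrightarrow> lp (map (\<lambda>(d,f). (c*d, e+f)) ys) z = c * z powi e * lp ys z"
  by (induction ys) (auto simp: power_int_add algebra_simps)

lemma lp_mulp: "z \<noteq> 0 \<Longrightarrow> lp (mulp xs ys) z = lp xs z * lp ys z"
  by (induction xs) (auto simp: mulp_def lp_scale algebra_simps)

lemma lp_meas[measurable]: "lp xs \<in> borel_measurable borel"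
proof (induction xs)
  case Nil then show ?case by (simp add: lp_def)
next
  case (Cons x xs)
  obtain c e where x: "x = (c, e)" by (cases x)
  have [measurable]: "lp xs \<in> borel_measurable borel" by (rule Cons)
  have "lp (x # xs) = (\<lambda>z. c * z powi e + lp xs z)" by (simp add: x fun_eq_iff)
  also have "\<dots> \<in> borel_measurable borel" by measurable
  finally show ?case .
qed

lemma L2_lp: "L2 (lp xs)"
proof (induction xs)
  case Nil then show ?case using L2_const[of 0] by (simp add: lp_def)
next
  case (Cons x xs)
  obtain c e where x: "x = (c, e)" by (cases x)
  have "lp (x # xs) = (\<lambda>z. c * z powi e + lp xs z)" by (simp add: x fun_eq_iff)
  moreover have "L2 (\<lambda>z. c * z powi e + lp xs z)"
    by (intro L2_add L2_cmult L2_powi Cons)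
  ultimately show ?case by simp
qed

lemma int_lp_zero:
  assumes h: "L2 h" and z: "\<forall>n. fcoef h n = 0"
  shows "integral\<^sup>L cm (\<lambda>z. h z * lp xs z) = 0"
proof (induction xs)
  case Nil then show ?case by simp
next
  case (Cons x xs)
  obtain c e where x: "x = (c, e)" by (cases x)
  have "integral\<^sup>L cm (\<lambda>z. h z * lp (x # xs) z) =
        integral\<^sup>L cm (\<lambda>z. c * (h z * z powi e) + h z * lp xs z)"
    by (simp add: x algebra_simps)
  also have "\<dots> = c * integral\<^sup>L cm (\<lambda>z. h z * z powi e) + integral\<^sup>L cm (\<lambda>z. h z * lp xs z)"
  proof (subst Bochner_Integration.integral_add)
    show "integrable cm (\<lambda>z. c * (h z * z powi e))"
      by (rule integrable_mult_right) (rule fcoef_int[OF h])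
    show "integrable cm (\<lambda>z. h z * lp xs z)" by (rule L2_prod_int[OF h L2_lp])
  qed simp
  also have "integral\<^sup>L cm (\<lambda>z. h z * z powi e) = fcoef h (-e)"
    by (simp add: fcoef_def)
  finally show ?case using Cons z by simp
qed

lemma lin_alg: "((a::complex) - \<i> * b) / 2 * z + (a + \<i> * b) / 2 * w = a * ((z + w) / 2) + b * (\<i> * (w - z) / 2)"
  by (simp add: field_simps)

lemma rpf_lp:
  fixes q :: "complex \<Rightarrow> real"
  assumes "real_polynomial_function q"
  shows "\<exists>xs. \<forall>z. cmod z = 1 \<longrightarrow> complex_of_real (q z) = lp xs z"
  using assms
proof (induction rule: real_polynomial_function.induct)
  case (linear f)
  interpret bounded_linear f by fact
  have lin: "f z = Re z * f 1 + Im z * f \<i>" for z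
  proof -
    have "z = Re z *\<^sub>R 1 + Im z *\<^sub>R \<i>" by (simp add: complex_eq_iff)
    then have "f z = f (Re z *\<^sub>R 1 + Im z *\<^sub>R \<i>)" by simp
    also have "\<dots> = Re z * f 1 + Im z * f \<i>" by (simp add: add scale)
    finally show ?thesis .
  qed
  let ?xs = "[((of_real (f 1) - \<i> * of_real (f \<i>)) / 2, 1), ((of_real (f 1) + \<i> * of_real (f \<i>)) / 2, -1)]"
  have "complex_of_real (f z) = lp ?xs z" if z: "cmod z = 1" for z
  proof -
    have inv: "z powi (-1) = cnj z" using cnj_powi_circle'[OF z, of 1] by simp
    have e1: "(z + cnj z) / 2 = complex_of_real (Re z)" by (simp add: complex_eq_iff)
    have e2: "\<i> * (cnj z - z) / 2 = complex_of_real (Im z)" by (simp add: complex_eq_iff)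
    have "lp ?xs z = (of_real (f 1) - \<i> * of_real (f \<i>)) / 2 * z + (of_real (f 1) + \<i> * of_real (f \<i>)) / 2 * cnj z"
      using inv by simp
    also have "\<dots> = of_real (f 1) * ((z + cnj z) / 2) + of_real (f \<i>) * (\<i> * (cnj z - z) / 2)"
      by (rule lin_alg)
    also have "\<dots> = complex_of_real (f z)"
      unfolding e1 e2 lin[of z] by simp
    finally show ?thesis by (rule sym)
  qed
  then show ?case by blast
next
  case (const c)
  have "complex_of_real c = lp [(of_real c, 0)] z" for z by simp
  then show ?case by blast
next
  case (add f g)
  then obtain xs ys where "\<forall>z. cmod z = 1 \<longrightarrow> complex_of_real (f z) = lp xs z"
    "\<forall>z. cmod z = 1 \<longrightarrow> complex_of_real (g z) = lp ys z" by blast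
  then have "\<forall>z. cmod z = 1 \<longrightarrow> complex_of_real (f z + g z) = lp (xs @ ys) z" by simp
  then show ?case by blast
next
  case (mult f g)
  then obtain xs ys where xy: "\<forall>z. cmod z = 1 \<longrightarrow> complex_of_real (f z) = lp xs z"
    "\<forall>z. cmod z = 1 \<longrightarrow> complex_of_real (g z) = lp ys z" by blast
  then have "\<forall>z. cmod z = 1 \<longrightarrow> complex_of_real (f z * g z) = lp (mulp xs ys) z"
  proof (intro allI impI)
    fix z :: complex assume z: "cmod z = 1"
    then have "z \<noteq> 0" by auto
    then show "complex_of_real (f z * g z) = lp (mulp xs ys) z"
      using xy z by (simp add: lp_mulp)
  qed
  then show ?case by blast
qed

lemma cont_zero:
  fixes \<phi> :: "complex \<Rightarrow> real"
  assumes h: "L2 h" and z: "\<forall>n. fcoef h n = 0"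
    and cont: "continuous_on UNIV \<phi>" and bnd: "\<And>z. \<bar>\<phi> z\<bar> \<le> B"
  shows "integral\<^sup>L cm (\<lambda>z. h z * of_real (\<phi> z)) = 0"
proof -
  have [measurable]: "h \<in> borel_measurable borel" using h by (rule L2_meas)
  have [measurable]: "\<phi> \<in> borel_measurable borel"
    using cont by (rule borel_measurable_continuous_onI)
  define K where "K = integral\<^sup>L cm (\<lambda>z. cmod (h z))"
  have K0: "K \<ge> 0" unfolding K_def by (rule integral_nonneg_AE) simp
  have hphi: "L2 (\<lambda>z. of_real (\<phi> z) * h z)"
    by (rule L2_bmult[where B=B, OF h]) (use bnd in auto)
  have main: "cmod (integral\<^sup>L cm (\<lambda>z. h z * of_real (\<phi> z))) \<le> e * K" if e: "e > 0" for e
  proof -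
    obtain g where g: "polynomial_function g" and gS: "\<forall>x\<in>sphere 0 1. norm (\<phi> x - g x) < e"
      using Stone_Weierstrass_polynomial_function[OF compact_sphere continuous_on_subset[OF cont] e]
      by blast
    have "real_polynomial_function g" using g by (simp add: real_polynomial_function_eq)
    then obtain xs where xs: "\<forall>z. cmod z = 1 \<longrightarrow> complex_of_real (g z) = lp xs z"
      using rpf_lp by blast
    have "integral\<^sup>L cm (\<lambda>z. h z * of_real (\<phi> z)) =
          integral\<^sup>L cm (\<lambda>z. h z * of_real (\<phi> z)) - integral\<^sup>L cm (\<lambda>z. h z * lp xs z)"
      using int_lp_zero[OF h z] by simp
    also have "\<dots> = integral\<^sup>L cm (\<lambda>z. h z * (of_real (\<phi> z) - lp xs z))"
    proof (subst Bochner_Integration.integral_diff[symmetric])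
      show "integrable cm (\<lambda>z. h z * of_real (\<phi> z))"
        using L2_int[OF hphi] by (simp add: mult.commute)
      show "integrable cm (\<lambda>z. h z * lp xs z)" by (rule L2_prod_int[OF h L2_lp])
    qed (simp add: right_diff_distrib)
    also have "cmod \<dots> \<le> integral\<^sup>L cm (\<lambda>z. cmod (h z * (of_real (\<phi> z) - lp xs z)))"
      by (rule integral_norm_bound)
    also have "\<dots> \<le> integral\<^sup>L cm (\<lambda>z. e * cmod (h z))"
    proof (rule integral_mono_AE)
      show "integrable cm (\<lambda>z. cmod (h z * (of_real (\<phi> z) - lp xs z)))"
      proof -
        have "L2 (\<lambda>z. (of_real (\<phi> z) - lp xs z))"
          by (intro L2_diff L2_lp) (rule L2_bounded[where B=B], measurable, use bnd in auto)
        from L2_prod_int[OF h this] show ?thesis by (rule integrable_norm)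
      qed
      show "integrable cm (\<lambda>z. e * cmod (h z))"
        using L2_int[OF h] by (intro integrable_mult_right integrable_norm)
      show "AE z in cm. cmod (h z * (of_real (\<phi> z) - lp xs z)) \<le> e * cmod (h z)"
        using AE_cm_circle
      proof eventually_elim
        case (elim z)
        have "cmod (of_real (\<phi> z) - lp xs z) = cmod (of_real (\<phi> z - g z))"
          using xs elim by simp
        also have "\<dots> < e"
        proof -
          have "z \<in> sphere 0 1" using elim by simp
          then have "\<bar>\<phi> z - g z\<bar> < e" using gS by auto
          then show ?thesis by (simp only: norm_of_real)
        qed
        finally have lt: "cmod (of_real (\<phi> z) - lp xs z) < e" .
        then have "cmod (of_real (\<phi> z) - lp xs z) * cmod (h z) \<le> e * cmod (h z)"
          by (intro mult_right_mono) auto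
        then show ?case
          by (simp add: norm_mult mult.commute)
      qed
    qed
    also have "\<dots> = e * K" by (simp add: K_def)
    finally show ?thesis .
  qed
  have "cmod (integral\<^sup>L cm (\<lambda>z. h z * of_real (\<phi> z))) \<le> 0"
  proof (rule field_le_epsilon)
    fix e :: real assume e: "e > 0"
    have "cmod (integral\<^sup>L cm (\<lambda>z. h z * of_real (\<phi> z))) \<le> e / (K + 1) * K"
      using main[of "e / (K+1)"] e K0 by simp
    also have "\<dots> \<le> e" using e K0 by (simp add: field_simps)
    finally show "cmod (integral\<^sup>L cm (\<lambda>z. h z * of_real (\<phi> z))) \<le> 0 + e" by simp
  qed
  then show ?thesis by simp
qed



lemma closed_zero:
  assumes h: "L2 h" and z: "\<forall>n. fcoef h n = 0" and C: "closed C"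
  shows "integral\<^sup>L cm (\<lambda>z. h z * indicator C z) = 0"
proof (cases "C = {}")
  case True then show ?thesis by simp
next
  case False
  have [measurable]: "h \<in> borel_measurable borel" using h by (rule L2_meas)
  have [measurable]: "C \<in> sets borel" using C by (rule borel_closed)
  define \<phi> where "\<phi> = (\<lambda>(k::nat) z. max 0 (1 - real k * infdist z C))"
  have cont: "continuous_on UNIV (\<phi> k)" for k
    unfolding \<phi>_def by (intro continuous_intros)
  have bnd: "\<bar>\<phi> k z\<bar> \<le> 1" for k z
    unfolding \<phi>_def using infdist_nonneg[of z C] by auto
  have [measurable]: "\<phi> k \<in> borel_measurable borel" for k
    using cont by (rule borel_measurable_continuous_onI)
  have zero: "integral\<^sup>L cm (\<lambda>z. h z * of_real (\<phi> k z)) = 0" for k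
    by (rule cont_zero[OF h z cont bnd])
  have lim: "(\<lambda>k. h z * of_real (\<phi> k z)) \<longlonglongrightarrow> h z * indicator C z" for z
  proof (cases "z \<in> C")
    case True
    then have "infdist z C = 0" using in_closed_iff_infdist_zero[OF C False] by simp
    then have "\<phi> k z = 1" for k unfolding \<phi>_def by simp
    then show ?thesis using True by simp
  next
    case nC: False
    have d: "infdist z C > 0" by (rule infdist_pos_not_in_closed[OF C False nC])
    show ?thesis
    proof (rule tendsto_eventually, rule eventually_sequentiallyI[of "nat \<lceil>1 / infdist z C\<rceil>"])
      fix k assume k: "nat \<lceil>1 / infdist z C\<rceil> \<le> k"
      then have "1 / infdist z C \<le> real k" by linarith
      then have "1 \<le> real k * infdist z C" using d by (simp add: field_simps)
      then have "\<phi> k z = 0" unfolding \<phi>_def by simp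
      then show "h z * of_real (\<phi> k z) = h z * indicator C z" using nC by simp
    qed
  qed
  have "(\<lambda>k. integral\<^sup>L cm (\<lambda>z. h z * of_real (\<phi> k z))) \<longlonglongrightarrow> integral\<^sup>L cm (\<lambda>z. h z * indicator C z)"
  proof (rule integral_dominated_convergence[where w="\<lambda>z. cmod (h z)"])
    show "(\<lambda>z. h z * indicator C z) \<in> borel_measurable cm" by measurable
    show "(\<lambda>z. h z * of_real (\<phi> k z)) \<in> borel_measurable cm" for k by measurable
    show "integrable cm (\<lambda>z. cmod (h z))" using L2_int[OF h] by (rule integrable_norm)
    show "AE z in cm. (\<lambda>k. h z * of_real (\<phi> k z)) \<longlonglongrightarrow> h z * indicator C z"
      using lim by simp
    show "AE z in cm. norm (h z * of_real (\<phi> k z)) \<le> cmod (h z)" for k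
    proof (rule AE_I2)
      fix z
      have "cmod (h z) * \<bar>\<phi> k z\<bar> \<le> cmod (h z) * 1"
        using bnd[of k z] by (intro mult_left_mono) auto
      then show "norm (h z * of_real (\<phi> k z)) \<le> cmod (h z)" by (simp add: norm_mult)
    qed
  qed
  then have "(\<lambda>k. 0) \<longlonglongrightarrow> integral\<^sup>L cm (\<lambda>z. h z * indicator C z)"
    by (simp add: zero)
  then show ?thesis using LIMSEQ_unique[OF _ tendsto_const] by metis
qed

lemma sets_borel_closed: "sets (borel :: complex measure) = sigma_sets UNIV (Collect closed)"
  unfolding borel_eq_closed by simp

lemma real_nonpos_AE:
  fixes u :: "complex \<Rightarrow> real"
  assumes u: "integrable cm u" and C: "\<And>C. closed C \<Longrightarrow> integral\<^sup>L cm (\<lambda>z. u z * indicator C z) = 0"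
  shows "AE z in cm. u z \<le> 0"
proof -
  have [measurable]: "u \<in> borel_measurable borel"
    using borel_measurable_integrable[OF u] by (simp add: meas_cm_iff)
  define M1 where "M1 = density cm (\<lambda>z. ennreal (u z))"
  define M2 where "M2 = density cm (\<lambda>z. ennreal (- u z))"
  have eq: "emeasure M1 A = emeasure M2 A" if A: "closed A" for A
  proof -
    have [measurable]: "A \<in> sets borel" using A by (rule borel_closed)
    let ?f = "\<lambda>z. u z * indicator A z"
    have "integrable cm (\<lambda>z. indicator A z *\<^sub>R u z)"
      by (rule integrable_mult_indicator) (simp_all add: u)
    then have int: "integrable cm ?f" by (simp add: mult.commute)
    have 1: "emeasure M1 A = (\<integral>\<^sup>+z. ennreal (?f z) \<partial>cm)"
      unfolding M1_def by (subst emeasure_density) (auto intro!: nn_integral_cong simp: indicator_def)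
    have 2: "emeasure M2 A = (\<integral>\<^sup>+z. ennreal (- ?f z) \<partial>cm)"
      unfolding M2_def by (subst emeasure_density) (auto intro!: nn_integral_cong simp: indicator_def)
    have f1: "(\<integral>\<^sup>+z. ennreal (?f z) \<partial>cm) \<noteq> \<infinity>" using integrableD(2)[OF int] .
    have f2: "(\<integral>\<^sup>+z. ennreal (- ?f z) \<partial>cm) \<noteq> \<infinity>" using integrableD(3)[OF int] .
    have "enn2real (\<integral>\<^sup>+z. ennreal (?f z) \<partial>cm) - enn2real (\<integral>\<^sup>+z. ennreal (- ?f z) \<partial>cm) = 0"
      using real_lebesgue_integral_def[OF int] C[OF A] by simp
    then have "enn2real (\<integral>\<^sup>+z. ennreal (?f z) \<partial>cm) = enn2real (\<integral>\<^sup>+z. ennreal (- ?f z) \<partial>cm)"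
      by simp
    then have "(\<integral>\<^sup>+z. ennreal (?f z) \<partial>cm) = (\<integral>\<^sup>+z. ennreal (- ?f z) \<partial>cm)"
      using f1 f2 by (metis ennreal_enn2real top.not_eq_extremum infinity_ennreal_def)
    then show ?thesis using 1 2 by simp
  qed
  have "M1 = M2"
  proof (rule measure_eqI_generator_eq[where E="Collect closed" and \<Omega>=UNIV and A="\<lambda>_. UNIV"])
    show "Int_stable (Collect closed)" by (auto simp: Int_stable_def)
    show "Collect closed \<subseteq> Pow UNIV" by simp
    show "\<And>X. X \<in> Collect closed \<Longrightarrow> emeasure M1 X = emeasure M2 X" using eq by simp
    show "sets M1 = sigma_sets UNIV (Collect closed)" unfolding M1_def by (simp add: sets_borel_closed)
    show "sets M2 = sigma_sets UNIV (Collect closed)" unfolding M2_def by (simp add: sets_borel_closed)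
    show "range (\<lambda>_. UNIV) \<subseteq> Collect closed" by simp
    show "(\<Union>i. UNIV) = UNIV" by simp
    fix i :: nat
    have "emeasure M1 UNIV = (\<integral>\<^sup>+z. ennreal (u z) \<partial>cm)"
      unfolding M1_def by (subst emeasure_density) auto
    also have "\<dots> \<noteq> \<infinity>" using integrableD(2)[OF u] .
    finally show "emeasure M1 UNIV \<noteq> \<infinity>" .
  qed
  define B where "B = {z. u z > 0}"
  have [measurable]: "B \<in> sets borel" unfolding B_def by measurable
  have "emeasure M2 B = (\<integral>\<^sup>+z. ennreal (- u z) * indicator B z \<partial>cm)"
    unfolding M2_def by (subst emeasure_density) auto
  also have "\<dots> = (\<integral>\<^sup>+z. 0 \<partial>cm)"
    by (intro nn_integral_cong) (auto simp: B_def indicator_def ennreal_neg)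
  finally have "emeasure M1 B = 0" using \<open>M1 = M2\<close> by simp
  then have "(\<integral>\<^sup>+z. ennreal (u z) * indicator B z \<partial>cm) = 0"
    unfolding M1_def by (subst (asm) emeasure_density) auto
  then have "AE z in cm. ennreal (u z) * indicator B z = 0"
    by (subst (asm) nn_integral_0_iff_AE) auto
  then show ?thesis
    by eventually_elim (auto simp: B_def indicator_def ennreal_eq_0_iff)
qed

lemma real_zero_AE:
  fixes u :: "complex \<Rightarrow> real"
  assumes u: "integrable cm u" and C: "\<And>C. closed C \<Longrightarrow> integral\<^sup>L cm (\<lambda>z. u z * indicator C z) = 0"
  shows "AE z in cm. u z = 0"
proof -
  have 1: "AE z in cm. u z \<le> 0" by (rule real_nonpos_AE[OF u C])
  have 2: "AE z in cm. - u z \<le> 0"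
  proof (rule real_nonpos_AE)
    show "integrable cm (\<lambda>z. - u z)" using u by simp
    fix C :: "complex set" assume "closed C"
    then show "integral\<^sup>L cm (\<lambda>z. - u z * indicator C z) = 0"
      using C[of C] by simp
  qed
  from 1 2 show ?thesis by eventually_elim simp
qed

lemma fcoef_zero_AE:
  assumes h: "L2 h" and z: "\<forall>n. fcoef h n = 0"
  shows "AE z in cm. h z = 0"
proof -
  have int: "integrable cm h" using h by (rule L2_int)
  have hC: "integrable cm (\<lambda>z. h z * indicator C z)" if C: "closed C" for C
  proof (rule L2_prod_int[OF h])
    have [measurable]: "C \<in> sets borel" using C by (rule borel_closed)
    show "L2 (indicator C :: complex \<Rightarrow> complex)"
      by (rule L2_bounded[where B=1]) (auto simp: indicator_def)
  qed
  have re: "AE z in cm. Re (h z) = 0"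
  proof (rule real_zero_AE)
    show "integrable cm (\<lambda>z. Re (h z))" using int by simp
    fix C :: "complex set" assume C: "closed C"
    have "integral\<^sup>L cm (\<lambda>z. Re (h z) * indicator C z) = integral\<^sup>L cm (\<lambda>z. Re (h z * indicator C z))"
      by (intro Bochner_Integration.integral_cong) (auto simp: indicator_def)
    also have "\<dots> = Re (integral\<^sup>L cm (\<lambda>z. h z * indicator C z))" using hC[OF C] by (rule integral_Re)
    also have "\<dots> = 0" using closed_zero[OF h z C] by simp
    finally show "integral\<^sup>L cm (\<lambda>z. Re (h z) * indicator C z) = 0" .
  qed
  have im: "AE z in cm. Im (h z) = 0"
  proof (rule real_zero_AE)
    show "integrable cm (\<lambda>z. Im (h z))" using int by simp
    fix C :: "complex set" assume C: "closed C"
    have "integral\<^sup>L cm (\<lambda>z. Im (h z) * indicator C z) = integral\<^sup>L cm (\<lambda>z. Im (h z * indicator C z))"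
      by (intro Bochner_Integration.integral_cong) (auto simp: indicator_def)
    also have "\<dots> = Im (integral\<^sup>L cm (\<lambda>z. h z * indicator C z))" using hC[OF C] by (rule integral_Im)
    also have "\<dots> = 0" using closed_zero[OF h z C] by simp
    finally show "integral\<^sup>L cm (\<lambda>z. Im (h z) * indicator C z) = 0" .
  qed
  from re im show ?thesis by eventually_elim (simp add: complex_eq_iff)
qed

lemma same_coef_AE:
  assumes "L2 a" "L2 b" "\<forall>n. fcoef a n = fcoef b n"
  shows "AE z in cm. a z = b z"
proof -
  have "AE z in cm. a z - b z = 0"
    by (rule fcoef_zero_AE) (use assms in \<open>auto intro: L2_diff simp: fcoef_diff\<close>)
  then show ?thesis by eventually_elim simp
qed

lemma nsq_cong_AE:
  assumes "AE z in cm. cmod (a z) = cmod (b z)" "L2 a" "L2 b"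
  shows "nsq a = nsq b"
proof -
  have [measurable]: "a \<in> borel_measurable borel" "b \<in> borel_measurable borel"
    using assms(2,3) by (auto intro: L2_meas)
  show ?thesis unfolding nsq_def
  proof (rule integral_cong_AE)
    show "AE z in cm. (cmod (a z))\<^sup>2 = (cmod (b z))\<^sup>2"
      using assms(1) by eventually_elim simp
    show "(\<lambda>z. (cmod (a z))\<^sup>2) \<in> borel_measurable cm" by measurable
    show "(\<lambda>z. (cmod (b z))\<^sup>2) \<in> borel_measurable cm" by measurable
  qed
qed

lemma Pproj_spec:
  assumes "L2 k"
  shows "L2 (Pproj k) \<and> (\<forall>n. fcoef (Pproj k) n = (if 0 \<le> n then fcoef k n else 0))"
proof -
  have "\<exists>p. L2 p \<and> (\<forall>n. fcoef p n = (if 0 \<le> n then fcoef k n else 0))"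
    using proj_exists[OF assms] by blast
  then show ?thesis unfolding Pproj_def by (rule someI_ex)
qed

lemma nsq_cnj: "nsq (\<lambda>z. cnj (h z)) = nsq h"
  by (simp add: nsq_def)

lemma orth:
  assumes r: "L2 r" and r0: "\<forall>m\<ge>0. fcoef r m = 0" and h: "H2 h"
  shows "ip r h = 0"
proof -
  have hL: "L2 h" and hneg: "\<forall>n<0. fcoef h n = 0" using h by (auto simp: H2_def)
  obtain p where p: "L2 p" and pc: "\<forall>m. fcoef p m = (if 0 \<le> m then fcoef h m else 0)"
    and lim: "(\<lambda>N. nsq (\<lambda>z. tp (fcoef h) {0..int N} z - p z)) \<longlonglongrightarrow> 0"
    using proj_exists[OF hL] by blast
  have "AE z in cm. p z = h z"
    by (rule same_coef_AE[OF p hL]) (use pc hneg in auto)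
  define S where "S = (\<lambda>N::nat. tp (fcoef h) {0..int N})"
  have S: "L2 (S N)" for N unfolding S_def by (rule L2_tp)
  have bound: "cmod (ip r h) \<le> sqrt (nsq r) * sqrt (nsq (\<lambda>z. S N z - p z))" for N
  proof -
    have "ip r (S N) = 0"
      unfolding S_def using r by (simp add: ip_tp_right r0)
    then have "ip r h = ip r (\<lambda>z. h z - S N z)"
      by (simp add: ip_diff_right r hL S)
    also have "cmod \<dots> \<le> sqrt (nsq r) * sqrt (nsq (\<lambda>z. cnj (h z - S N z)))"
      unfolding ip_def by (rule CS_cm'[OF r]) (intro L2_cnj L2_diff hL S)
    also have "nsq (\<lambda>z. cnj (h z - S N z)) = nsq (\<lambda>z. S N z - p z)"
    proof -
      have "nsq (\<lambda>z. cnj (h z - S N z)) = nsq (\<lambda>z. h z - S N z)" by (rule nsq_cnj)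
      also have "\<dots> = nsq (\<lambda>z. p z - S N z)"
        by (rule nsq_cong_AE) (use \<open>AE z in cm. p z = h z\<close> in \<open>auto elim!: eventually_mono intro: L2_diff hL S p\<close>)
      also have "\<dots> = nsq (\<lambda>z. S N z - p z)" by (rule nsq_commute)
      finally show ?thesis .
    qed
    finally show ?thesis .
  qed
  have "(\<lambda>N. sqrt (nsq r) * sqrt (nsq (\<lambda>z. S N z - p z))) \<longlonglongrightarrow> sqrt (nsq r) * sqrt 0"
    by (intro tendsto_intros) (use lim in \<open>simp add: S_def\<close>)
  then have "cmod (ip r h) \<le> sqrt (nsq r) * sqrt 0"
    by (rule LIMSEQ_le_const) (use bound in auto)
  then show ?thesis by simp
qed

lemma Hinf_meas: "Hinf f \<Longrightarrow> f \<in> borel_measurable borel"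
  by (simp add: Hinf_def meas_cm_iff)

lemma Hinf_bound:
  assumes "Hinf f"
  shows "\<exists>B. AE z in cm. cmod (f z) \<le> B"
proof -
  obtain F where bF: "bounded (F ` ball 0 1)" and rad: "radial_bv F f"
    using assms by (auto simp: Hinf_def)
  obtain B where B: "\<forall>w\<in>ball 0 1. cmod (F w) \<le> B"
    using bF by (auto simp: bounded_iff)
  have "AE z in cm. cmod (f z) \<le> B"
    using rad[unfolded radial_bv_def] AE_cm_circle
  proof eventually_elim
    case (elim z)
    have lim: "((\<lambda>r::real. cmod (F (of_real r * z))) \<longlongrightarrow> cmod (f z)) (at_left 1)"
      using elim(1) by (rule tendsto_norm)
    have e0: "eventually (\<lambda>r::real. r \<in> {0<..<1}) (at_left 1)"
      by (rule eventually_at_left_real) simp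
    have ev: "eventually (\<lambda>r::real. cmod (F (of_real r * z)) \<le> B) (at_left 1)"
      using e0
    proof (rule eventually_mono)
      fix r :: real assume "r \<in> {0<..<1}"
      then have "of_real r * z \<in> ball 0 1" using elim(2) by (simp add: norm_mult)
      then show "cmod (F (of_real r * z)) \<le> B" using B by blast
    qed
    show ?case
      by (rule tendsto_upperbound[OF lim ev]) simp
  qed
  then show ?thesis by blast
qed

lemma fcoef_cong_AE:
  assumes "AE z in cm. a z = b z" "a \<in> borel_measurable borel" "b \<in> borel_measurable borel"
  shows "fcoef a n = fcoef b n"
proof -
  have [measurable]: "a \<in> borel_measurable borel" "b \<in> borel_measurable borel" by fact+
  show ?thesis unfolding fcoef_def
  proof (rule integral_cong_AE)
    show "AE z in cm. a z * z powi - n = b z * z powi - n"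
      using assms(1) by eventually_elim simp
    show "(\<lambda>z. a z * z powi - n) \<in> borel_measurable cm" by measurable
    show "(\<lambda>z. b z * z powi - n) \<in> borel_measurable cm" by measurable
  qed
qed

lemma powi_circ_lemma1:
  assumes "cmod z = 1"
  shows "cnj z * cnj w * z powi (-n) = cnj (w * z powi (n + 1))"
proof -
  have z0: "z \<noteq> 0" using assms by auto
  have "cnj (w * z powi (n + 1)) = cnj w * (cnj z powi n * cnj z)"
    using z0 by (simp add: power_int_add)
  also have "cnj z powi n = z powi (-n)" by (rule cnj_powi_circle'[OF assms])
  finally have *: "cnj (w * z powi (n + 1)) = cnj w * (z powi - n * cnj z)" .
  have "cnj z * cnj w * z powi (-n) = cnj w * (z powi - n * cnj z)" by (simp only: mult_ac)
  then show ?thesis using * by (rule trans_sym)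
qed

lemma main_identity:
  assumes z0: "z \<noteq> 0"
  shows "t * (cnj z * fz) * cnj (gz * z powi n) = cnj (cnj t * gz * cnj fz * z powi (n + 1))"
proof -
  have "cnj (z powi (n + 1)) = cnj (z powi n) * cnj z"
    using z0 by (simp add: power_int_add)
  then show ?thesis by (simp add: mult_ac)
qed

theorem lemma2p3:
  fixes \<theta> g f :: "complex \<Rightarrow> complex"
  assumes "inner_fun \<theta>" and "H2 g" and "Hinf f"
  shows "P_exists (\<lambda>z. cnj (g z) * Vop \<theta> (Uop f) z) \<and>
         l2_norm (Pproj (\<lambda>z. cnj (g z) * Vop \<theta> (Uop f) z)) =
         l2_norm (Pperp (\<lambda>z. cnj (\<theta> z) * g z * fstar f z))"
proof -
  have [measurable]: "\<theta> \<in> borel_measurable borel"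
    using assms(1) by (simp add: inner_fun_def Hinf_meas)
  have th1: "AE z in cm. cmod (\<theta> z) = 1"
    using assms(1) by (simp add: inner_fun_def)
  have [measurable]: "f \<in> borel_measurable borel" using assms(3) by (rule Hinf_meas)
  obtain B where fB: "AE z in cm. cmod (f z) \<le> B" using Hinf_bound[OF assms(3)] by blast
  have fB': "AE z in cm. cmod (f (cnj z)) \<le> B" by (rule AE_cm_cnj[OF fB])
  have gL: "L2 g" and gneg: "\<forall>n<0. fcoef g n = 0" using assms(2) by (auto simp: H2_def)
  have [measurable]: "g \<in> borel_measurable borel" using gL by (rule L2_meas)
  define a where "a = (\<lambda>z. \<theta> z * Uop f z)"
  have a_eq: "a = (\<lambda>z. \<theta> z * (cnj z * f (cnj z)))" by (simp add: a_def Uop_def)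
  have [measurable]: "a \<in> borel_measurable borel" unfolding a_eq by measurable
  have aL: "L2 a"
  proof (rule L2_bounded[where B=B])
    show "AE z in cm. cmod (a z) \<le> B"
      using th1 AE_cm_circle fB'
    proof eventually_elim
      case (elim z)
      then show ?case by (simp add: a_eq norm_mult)
    qed
  qed measurable
  define k where "k = (\<lambda>z. cnj (\<theta> z) * g z * fstar f z)"
  have k_eq: "k = (\<lambda>z. (cnj (\<theta> z) * cnj (f (cnj z))) * g z)"
    by (simp add: k_def fstar_def fun_eq_iff mult_ac)
  have [measurable]: "k \<in> borel_measurable borel" unfolding k_eq by measurable
  have kL: "L2 k"
    unfolding k_eq
  proof (rule L2_bmult[OF gL, where B=B])
    show "AE z in cm. cmod (cnj (\<theta> z) * cnj (f (cnj z))) \<le> B"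
      using th1 fB'
    proof eventually_elim
      case (elim z)
      then show ?case by (simp add: norm_mult)
    qed
  qed measurable
  define V where "V = Pproj a"
  have VV: "Vop \<theta> (Uop f) = V" by (simp add: Vop_def V_def a_def)
  have VL: "L2 V" and Vc: "\<forall>n. fcoef V n = (if 0 \<le> n then fcoef a n else 0)"
    using Pproj_spec[OF aL] by (auto simp: V_def)
  have [measurable]: "V \<in> borel_measurable borel" using VL by (rule L2_meas)
  define q where "q = Pperp k"
  have PkL: "L2 (Pproj k)" and Pkc: "\<forall>n. fcoef (Pproj k) n = (if 0 \<le> n then fcoef k n else 0)"
    using Pproj_spec[OF kL] by auto
  have q_eq: "q = (\<lambda>z. k z - Pproj k z)" by (simp add: q_def Pperp_def)
  have qL: "L2 q" unfolding q_eq by (rule L2_diff[OF kL PkL])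
  have [measurable]: "q \<in> borel_measurable borel" using qL by (rule L2_meas)
  have qc: "fcoef q m = (if m < 0 then fcoef k m else 0)" for m
    unfolding q_eq using fcoef_diff[OF kL PkL, of m] Pkc by simp
  define p where "p = (\<lambda>z. cnj z * cnj (q z))"
  have [measurable]: "p \<in> borel_measurable borel" unfolding p_def by measurable
  have pL: "L2 p"
    unfolding p_def
  proof (rule L2_bmult[OF L2_cnj[OF qL], where B=1])
    show "AE z in cm. cmod (cnj z) \<le> 1" using AE_cm_circle by eventually_elim simp
  qed measurable
  have pc1: "fcoef p n = cnj (fcoef q (-(n+1)))" for n
  proof -
    have "fcoef p n = integral\<^sup>L cm (\<lambda>z. cnj (q z * z powi (n + 1)))"
      unfolding fcoef_def
    proof (rule integral_cong_AE)
      show "AE z in cm. p z * z powi - n = cnj (q z * z powi (n + 1))"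
        using AE_cm_circle
      proof eventually_elim
        case (elim z)
        show ?case unfolding p_def by (rule powi_circ_lemma1[OF elim])
      qed
      show "(\<lambda>z. p z * z powi - n) \<in> borel_measurable cm" by measurable
      show "(\<lambda>z. cnj (q z * z powi (n + 1))) \<in> borel_measurable cm" by measurable
    qed
    also have "\<dots> = cnj (fcoef q (-(n+1)))"
      unfolding fcoef_def by (simp only: Bochner_Integration.integral_cnj minus_minus)
    finally show ?thesis .
  qed
  define GB where "GB = (\<lambda>z. cnj (g z) * V z)"
  have [measurable]: "GB \<in> borel_measurable borel" unfolding GB_def by measurable
  have key: "fcoef GB n = cnj (fcoef k (-(n+1)))" if n: "n \<ge> 0" for n
  proof -
    define G where "G = (\<lambda>z. g z * z powi n)"
    have [measurable]: "G \<in> borel_measurable borel" unfolding G_def by measurable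
    have GL: "L2 G"
    proof -
      have "L2 (\<lambda>z. z powi n * g z)"
        by (rule L2_bmult[OF gL, where B=1]) (use AE_cm_circle in \<open>auto elim!: eventually_mono simp: norm_power_int\<close>)
      then show ?thesis unfolding G_def by (simp add: mult.commute)
    qed
    have Gc: "fcoef G m = fcoef g (m - n)" for m
      unfolding fcoef_def G_def
    proof (rule integral_cong_AE)
      show "AE z in cm. g z * z powi n * z powi - m = g z * z powi - (m - n)"
        using AE_cm_nz
      proof eventually_elim
        case (elim z)
        then have "z powi n * z powi - m = z powi - (m - n)"
          by (simp add: power_int_add[symmetric])
        then show ?case by (simp add: mult.assoc)
      qed
      show "(\<lambda>z. g z * z powi n * z powi - m) \<in> borel_measurable cm" by measurable
      show "(\<lambda>z. g z * z powi - (m - n)) \<in> borel_measurable cm" by measurable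
    qed
    have GH2: "H2 G"
      unfolding H2_def using GL Gc gneg n by auto
    have 1: "fcoef GB n = ip V G"
      unfolding fcoef_def ip_def
    proof (rule integral_cong_AE)
      show "AE z in cm. GB z * z powi - n = V z * cnj (G z)"
        using AE_cm_circle
      proof eventually_elim
        case (elim z)
        have "cnj z powi n = z powi (-n)" by (rule cnj_powi_circle'[OF elim])
        then show ?case by (simp add: GB_def G_def mult_ac)
      qed
      show "(\<lambda>z. GB z * z powi - n) \<in> borel_measurable cm" by measurable
      show "(\<lambda>z. V z * cnj (G z)) \<in> borel_measurable cm" by measurable
    qed
    have 2: "ip V G = ip a G"
    proof -
      have "ip (\<lambda>z. V z - a z) G = 0"
      proof (rule orth[OF L2_diff[OF VL aL] _ GH2])
        show "\<forall>m\<ge>0. fcoef (\<lambda>z. V z - a z) m = 0"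
          using Vc by (simp add: fcoef_diff[OF VL aL])
      qed
      then show ?thesis by (simp add: ip_diff_left[OF VL aL GL])
    qed
    have 3: "ip a G = cnj (fcoef k (-(n+1)))"
    proof -
      have "ip a G = integral\<^sup>L cm (\<lambda>z. cnj (k z * z powi (n + 1)))"
        unfolding ip_def
      proof (rule integral_cong_AE)
        show "AE z in cm. a z * cnj (G z) = cnj (k z * z powi (n + 1))"
          using AE_cm_nz
        proof eventually_elim
          case (elim z)
          show ?case unfolding a_eq G_def k_def fstar_def
            by (rule main_identity[OF elim])
        qed
        show "(\<lambda>z. a z * cnj (G z)) \<in> borel_measurable cm" by measurable
        show "(\<lambda>z. cnj (k z * z powi (n + 1))) \<in> borel_measurable cm" by measurable
      qed
      also have "\<dots> = cnj (fcoef k (-(n+1)))"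
        unfolding fcoef_def by (simp only: Bochner_Integration.integral_cnj minus_minus)
      finally show ?thesis .
    qed
    show ?thesis using 1 2 3 by simp
  qed
  have pc: "\<forall>n. fcoef p n = (if 0 \<le> n then fcoef GB n else 0)"
  proof
    fix n :: int
    show "fcoef p n = (if 0 \<le> n then fcoef GB n else 0)"
    proof (cases "0 \<le> n")
      case True
      then show ?thesis using pc1[of n] qc[of "-(n+1)"] key[OF True] by simp
    next
      case False
      then show ?thesis using pc1[of n] qc[of "-(n+1)"] by simp
    qed
  qed
  have GBeq: "(\<lambda>z. cnj (g z) * Vop \<theta> (Uop f) z) = GB" by (simp add: VV GB_def)
  have ex: "P_exists GB"
    unfolding P_exists_def using pL pc by blast
  have "\<exists>p. L2 p \<and> (\<forall>n. fcoef p n = (if 0 \<le> n then fcoef GB n else 0))"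
    using pL pc by blast
  then have P1: "L2 (Pproj GB) \<and> (\<forall>n. fcoef (Pproj GB) n = (if 0 \<le> n then fcoef GB n else 0))"
    unfolding Pproj_def by (rule someI_ex)
  have "AE z in cm. Pproj GB z = p z"
    by (rule same_coef_AE) (use P1 pL pc in auto)
  then have "nsq (Pproj GB) = nsq p"
    by (intro nsq_cong_AE) (use P1 pL in \<open>auto elim!: eventually_mono\<close>)
  also have "nsq p = nsq q"
  proof (rule nsq_cong_AE)
    show "AE z in cm. cmod (p z) = cmod (q z)"
      using AE_cm_circle by eventually_elim (simp add: p_def norm_mult)
  qed (use pL qL in auto)
  finally have "l2_norm (Pproj GB) = l2_norm q" by (simp add: l2_norm_nsq)
  then show ?thesis
    using ex unfolding GBeq q_def k_def by simp
qed

end
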